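(* Let $A$ be a commutative ring with unit, $X$ an alphabet, and $\star\in\mathcal{P}$. Then $(A\langle X\rangle,\star)$ is a commutative (and associative) $A$-algebra with unit $1_{X^*}$.
   Context: Conventions. $X^*$ is the free monoid on $X$, with empty word $1_{X^*}$. $A\langle X\rangle$ is the free $A$-module on $X^*$, with concatenation written by juxtaposition. $AX=\{\lambda x:\lambda\in A,\ x\in X\}$; note $0\in AX$. The class $\mathcal{P}$. $\mathcal{P}$ is the set of products $\star:A\langle X\rangle\times A\langle X\rangle\to A\langle X\rangle$ such that: (i) $\star$ is $A$-bilinear; (ii) $1_{X^*}\star w=w\star 1_{X^*}=w$ for all $w\in X^*$; (iii) for all $a,b\in X$ and $u,v\in X^*$, $au\star bv=a(u\star bv)+b(au\star v)+[a,b](u\star v)$. Here $[\cdot,\cdot]:X\times X\to AX$ is a map, extended to $AX\times AX$ by $[\lambda a,\mu b]=\lambda\mu[a,b]$, and it must satisfy $[a,b]=[b,a]$ and $[[a,b],c]=[a,[b,c]]$ for all $a,b,c\in X$. For $\lambda x\in AX$ and $P\in A\langle X\rangle$, $(\lambda x)P$ means $\lambda\, xP$. *)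

theory Defs
  imports "HOL-Library.Poly_Mapping"
begin

text \<open>A<X> = free A-module on the words X^*, modelled as finitely supported
  functions  'x list to 'a.  The word w is  Poly_Mapping.single w 1.\<close>

type_synonym ('x, 'a) ncpoly = "'x list \<Rightarrow>\<^sub>0 'a"

lift_definition smul :: "'a::comm_ring_1 \<Rightarrow> ('x, 'a) ncpoly \<Rightarrow> ('x, 'a) ncpoly"
  is "\<lambda>c p w. c * p w"
  by (erule rev_finite_subset) auto

text \<open>Left concatenation by a letter:  x P  (linear extension of w \<mapsto> x w).\<close>
lift_definition lmul :: "'x \<Rightarrow> ('x, 'a::comm_ring_1) ncpoly \<Rightarrow> ('x, 'a) ncpoly"
  is "\<lambda>x p w. case w of [] \<Rightarrow> 0 | y # v \<Rightarrow> (if y = x then p v else 0)"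
proof -
  fix x :: 'x and p :: "'x list \<Rightarrow> 'a"
  assume f: "finite {w. p w \<noteq> 0}"
  have "{w. (case w of [] \<Rightarrow> 0 | y # v \<Rightarrow> (if y = x then p v else 0)) \<noteq> 0}
        \<subseteq> (\<lambda>v. x # v) ` {w. p w \<noteq> 0}"
    by (auto simp: neq_Nil_conv split: list.splits if_splits)
  then show "finite {w. (case w of [] \<Rightarrow> 0 | y # v \<Rightarrow> (if y = x then p v else 0)) \<noteq> 0}"
    using f by (meson finite_imageI rev_finite_subset)
qed

abbreviation word :: "'x list \<Rightarrow> ('x, 'a::comm_ring_1) ncpoly"
  where "word w \<equiv> Poly_Mapping.single w 1"

text \<open>A bracket  [.,.] : X \<times> X \<rightarrow> AX  is given as a pair (coefficient, letter):
  br a b = (\<lambda>, c) stands for \<lambda>c \<in> AX.  Its image in A<X> is:\<close>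
definition AX_elem :: "'a::comm_ring_1 \<times> 'x \<Rightarrow> ('x, 'a) ncpoly"
  where "AX_elem lc = Poly_Mapping.single [snd lc] (fst lc)"

text \<open>Admissible brackets: symmetric and associative (with the bilinear
  extension [\<lambda>a,\<mu>b] = \<lambda>\<mu>[a,b]), equalities taken in AX \<subseteq> A<X>.\<close>
definition admissible_bracket :: "('x \<Rightarrow> 'x \<Rightarrow> 'a::comm_ring_1 \<times> 'x) \<Rightarrow> bool"
  where "admissible_bracket br \<longleftrightarrow>
     (\<forall>a b. AX_elem (br a b) = AX_elem (br b a)) \<and>
     (\<forall>a b c.
        AX_elem (fst (br a b) * fst (br (snd (br a b)) c), snd (br (snd (br a b)) c))
      = AX_elem (fst (br b c) * fst (br a (snd (br b c))), snd (br a (snd (br b c)))))"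

definition bilinear_prod :: "(('x, 'a::comm_ring_1) ncpoly \<Rightarrow> ('x, 'a) ncpoly \<Rightarrow> ('x, 'a) ncpoly) \<Rightarrow> bool"
  where "bilinear_prod st \<longleftrightarrow>
     (\<forall>p q r. st (p + q) r = st p r + st q r) \<and>
     (\<forall>p q r. st p (q + r) = st p q + st p r) \<and>
     (\<forall>c p q. st (smul c p) q = smul c (st p q)) \<and>
     (\<forall>c p q. st p (smul c q) = smul c (st p q))"

definition class_P :: "(('x, 'a::comm_ring_1) ncpoly \<Rightarrow> ('x, 'a) ncpoly \<Rightarrow> ('x, 'a) ncpoly) set"
  where "class_P = {st. bilinear_prod st \<and>
     (\<forall>w. st (word []) (word w) = word w \<and> st (word w) (word []) = word w) \<and>
     (\<exists>br. admissible_bracket br \<and>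
        (\<forall>a b u v. st (word (a # u)) (word (b # v)) =
            lmul a (st (word u) (word (b # v)))
          + lmul b (st (word (a # u)) (word v))
          + smul (fst (br a b)) (lmul (snd (br a b)) (st (word u) (word v)))))}"

end

theory Submission imports Defs begin

lemma smul_lookup: "Poly_Mapping.lookup (smul c p) w = c * Poly_Mapping.lookup p w" by (simp add: smul.rep_eq)
lemma lmul_lookup: "Poly_Mapping.lookup (lmul x p) w = (case w of [] \<Rightarrow> 0 | y # v \<Rightarrow> (if y = x then Poly_Mapping.lookup p v else 0))"
  by (simp add: lmul.rep_eq)

lemma smul_add: "smul c (p + q) = smul c p + smul c q"
  by (rule poly_mapping_eqI) (simp add: smul_lookup lookup_add distrib_left)
lemma smul_smul: "smul c (smul d p) = smul (c*d) p"
  by (rule poly_mapping_eqI) (simp add: smul_lookup mult.assoc)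
lemma lmul_add: "lmul x (p + q) = lmul x p + lmul x q"
  by (rule poly_mapping_eqI) (simp add: lmul_lookup lookup_add split: list.splits)
lemma lmul_smul: "lmul x (smul c p) = smul c (lmul x p)"
  by (rule poly_mapping_eqI) (simp add: lmul_lookup smul_lookup split: list.splits)
lemma lmul_word: "lmul x (word u) = word (x # u)"
  by (rule poly_mapping_eqI) (auto simp add: lmul_lookup lookup_single when_def split: list.splits)
lemma single_smul: "Poly_Mapping.single k c = smul c (word k)"
  by (rule poly_mapping_eqI) (simp add: smul_lookup lookup_single when_def)

lemma expansion: "p = (\<Sum>k\<in>Poly_Mapping.keys p. smul (Poly_Mapping.lookup p k) (word k))"
proof -
  have *: "finite I \<Longrightarrow> Poly_Mapping.lookup (\<Sum>i\<in>I. smul (Poly_Mapping.lookup p i) (word i)) j = (if j \<in> I then Poly_Mapping.lookup p j else 0)" for I j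
    by (induction I rule: finite_induct) (auto simp: lookup_single lookup_add smul_lookup when_def)
  show ?thesis by (rule poly_mapping_eqI) (fastforce simp add: Poly_Mapping.in_keys_iff *)
qed

lemma lin_ext:
  fixes F G :: "('x, 'a::comm_ring_1) ncpoly \<Rightarrow> ('b, 'a) ncpoly"
  assumes "\<And>p q. F (p+q) = F p + F q" "\<And>p q. G (p+q) = G p + G q"
    "\<And>c p. F (smul c p) = smul c (F p)" "\<And>c p. G (smul c p) = smul c (G p)"
    "\<And>w. F (word w) = G (word w)"
  shows "F p = G p"
proof -
  have F0: "F 0 = 0" using assms(1)[of 0 0] by simp
  have G0: "G 0 = 0" using assms(2)[of 0 0] by simp
  have "finite I \<Longrightarrow> F (\<Sum>k\<in>I. smul (Poly_Mapping.lookup p k) (word k)) = G (\<Sum>k\<in>I. smul (Poly_Mapping.lookup p k) (word k))" for I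
    by (induction I rule: finite_induct) (simp_all add: F0 G0 assms)
  then have "F (\<Sum>k\<in>Poly_Mapping.keys p. smul (Poly_Mapping.lookup p k) (word k)) = G (\<Sum>k\<in>Poly_Mapping.keys p. smul (Poly_Mapping.lookup p k) (word k))"
    by simp
  moreover have "F p = F (\<Sum>k\<in>Poly_Mapping.keys p. smul (Poly_Mapping.lookup p k) (word k))"
    by (rule arg_cong[OF expansion])
  moreover have "G p = G (\<Sum>k\<in>Poly_Mapping.keys p. smul (Poly_Mapping.lookup p k) (word k))"
    by (rule arg_cong[OF expansion])
  ultimately show ?thesis by simp
qed

lemma smul_zero: "smul 0 p = 0"
  by (rule poly_mapping_eqI) (simp add: smul_lookup)

lemma AX_eq_smul:
  assumes "AX_elem (l, d) = AX_elem (l', d')"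
  shows "smul l (lmul d X) = smul l' (lmul d' X)"
proof (cases "l = 0")
  case True
  then have "Poly_Mapping.single [d'] l' = 0" using assms by (simp add: AX_elem_def)
  then have "l' = 0" by (metis Poly_Mapping.lookup_single_eq Poly_Mapping.lookup_zero)
  then show ?thesis using True by (simp add: smul_zero)
next
  case False
  have "Poly_Mapping.lookup (Poly_Mapping.single [d] l) [d] = Poly_Mapping.lookup (Poly_Mapping.single [d'] l') [d]"
    using assms by (simp add: AX_elem_def)
  then have "l = (l' when [d'] = [d])" by (simp add: Poly_Mapping.lookup_single)
  then have "d' = d \<and> l' = l" using False by (auto simp: when_def split: if_splits)
  then show ?thesis by simp
qed

locale qs =
  fixes st :: "('x, 'a::comm_ring_1) ncpoly \<Rightarrow> ('x, 'a) ncpoly \<Rightarrow> ('x, 'a) ncpoly"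
    and br :: "'x \<Rightarrow> 'x \<Rightarrow> 'a \<times> 'x"
  assumes bil: "bilinear_prod st"
    and unitw: "\<forall>w. st (word []) (word w) = word w \<and> st (word w) (word []) = word w"
    and adm: "admissible_bracket br"
    and recw: "\<forall>a b u v. st (word (a # u)) (word (b # v)) =
            lmul a (st (word u) (word (b # v)))
          + lmul b (st (word (a # u)) (word v))
          + smul (fst (br a b)) (lmul (snd (br a b)) (st (word u) (word v)))"
begin

lemma st_addL: "st (p + q) r = st p r + st q r" using bil by (simp add: bilinear_prod_def)
lemma st_addR: "st p (q + r) = st p q + st p r" using bil by (simp add: bilinear_prod_def)
lemma st_smulL: "st (smul c p) q = smul c (st p q)" using bil by (simp add: bilinear_prod_def)
lemma st_smulR: "st p (smul c q) = smul c (st p q)" using bil by (simp add: bilinear_prod_def)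

lemmas lin = st_addL st_addR st_smulL st_smulR smul_add smul_smul lmul_add lmul_smul

lemma unitL: "st (word []) p = p"
  by (rule lin_ext[where F="st (word [])" and G="\<lambda>p. p"]) (simp_all add: lin unitw)
lemma unitR: "st p (word []) = p"
  by (rule lin_ext[where F="\<lambda>p. st p (word [])" and G="\<lambda>p. p"]) (simp_all add: lin unitw)

lemma L1: "st (lmul a (word u)) (lmul b Q) =
   lmul a (st (word u) (lmul b Q)) + lmul b (st (lmul a (word u)) Q)
   + smul (fst (br a b)) (lmul (snd (br a b)) (st (word u) Q))"
  by (rule lin_ext[where F="\<lambda>Q. st (lmul a (word u)) (lmul b Q)" and G="\<lambda>Q. lmul a (st (word u) (lmul b Q)) + lmul b (st (lmul a (word u)) Q)
   + smul (fst (br a b)) (lmul (snd (br a b)) (st (word u) Q))"])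
     (simp_all add: lin lmul_word recw ac_simps)

lemma L: "st (lmul a P) (lmul b Q) =
   lmul a (st P (lmul b Q)) + lmul b (st (lmul a P) Q)
   + smul (fst (br a b)) (lmul (snd (br a b)) (st P Q))"
  by (rule lin_ext[where F="\<lambda>P. st (lmul a P) (lmul b Q)" and G="\<lambda>P. lmul a (st P (lmul b Q)) + lmul b (st (lmul a P) Q)
   + smul (fst (br a b)) (lmul (snd (br a b)) (st P Q))"])
     (simp_all add: lin L1 ac_simps)


lemma brsym: "smul (fst (br a b)) (lmul (snd (br a b)) X) = smul (fst (br b a)) (lmul (snd (br b a)) X)"
  using adm AX_eq_smul unfolding admissible_bracket_def by (metis prod.collapse)

lemma brassoc: "smul (fst (br a b) * fst (br (snd (br a b)) c)) (lmul (snd (br (snd (br a b)) c)) X)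
  = smul (fst (br b c) * fst (br a (snd (br b c)))) (lmul (snd (br a (snd (br b c)))) X)"
  using adm AX_eq_smul unfolding admissible_bracket_def by metis

lemma commw: "st (word u) (word v) = st (word v) (word u)"
proof (induction "length u + length v" arbitrary: u v rule: less_induct)
  case less
  show ?case
  proof (cases u)
    case Nil then show ?thesis using unitw by simp
  next
    case (Cons a U)
    show ?thesis
    proof (cases v)
      case Nil then show ?thesis using unitw by simp
    next
      case (Cons b V)
      have "st (word u) (word v) = lmul a (st (word U) (word (b#V))) + lmul b (st (word (a#U)) (word V))
         + smul (fst (br a b)) (lmul (snd (br a b)) (st (word U) (word V)))"
        using recw \<open>u = a # U\<close> Cons by simp
      also have "\<dots> = lmul a (st (word (b#V)) (word U)) + lmul b (st (word V) (word (a#U)))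
         + smul (fst (br b a)) (lmul (snd (br b a)) (st (word V) (word U)))"
        using less \<open>u = a # U\<close> Cons brsym by simp
      also have "\<dots> = st (word v) (word u)"
        using recw \<open>u = a # U\<close> Cons by (simp add: ac_simps)
      finally show ?thesis .
    qed
  qed
qed

lemma comm: "st p q = st q p"
proof -
  have 1: "st (word w) q = st q (word w)" for w
    by (rule lin_ext[where F="\<lambda>q. st (word w) q" and G="\<lambda>q. st q (word w)"]) (simp_all add: lin commw)
  show ?thesis
    by (rule lin_ext[where F="\<lambda>p. st p q" and G="\<lambda>p. st q p"]) (simp_all add: lin 1)
qed



lemma assoc_step:
  assumes h1: "st (st U (lmul b V)) (lmul c W) = st U (st (lmul b V) (lmul c W))"
  and h2: "st (st (lmul a U) V) (lmul c W) = st (lmul a U) (st V (lmul c W))"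
  and h3: "st (lmul a U) (st (lmul b V) W) = st (st (lmul a U) (lmul b V)) W"
  and h4: "st (st U V) (lmul c W) = st U (st V (lmul c W))"
  and h5: "st (st U (lmul b V)) W = st U (st (lmul b V) W)"
  and h6: "st (st (lmul a U) V) W = st (lmul a U) (st V W)"
  and h7: "st (st U V) W = st U (st V W)"
  shows "st (st (lmul a U) (lmul b V)) (lmul c W) = st (lmul a U) (st (lmul b V) (lmul c W))"
  apply (simp only: L lin h1 h2 h3 h4 h5 h6 h7 brassoc)
  apply (simp add: add_ac)
  done


lemma assocw: "st (st (word u) (word v)) (word w) = st (word u) (st (word v) (word w))"
proof (induction "length u + length v + length w" arbitrary: u v w rule: less_induct)
  case less
  show ?case
  proof (cases "u = [] \<or> v = [] \<or> w = []")
    case True then show ?thesis by (auto simp: unitL unitR)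
  next
    case False
    then obtain a U b V c W where uvw: "u = a # U" "v = b # V" "w = c # W"
      by (meson neq_Nil_conv)
    note IH = less[unfolded uvw, simplified]
    have h1: "st (st (word U) (lmul b (word V))) (lmul c (word W)) = st (word U) (st (lmul b (word V)) (lmul c (word W)))"
      using IH[of U "b#V" "c#W"] by (simp add: lmul_word)
    have h2: "st (st (lmul a (word U)) (word V)) (lmul c (word W)) = st (lmul a (word U)) (st (word V) (lmul c (word W)))"
      using IH[of "a#U" V "c#W"] by (simp add: lmul_word)
    have h3: "st (lmul a (word U)) (st (lmul b (word V)) (word W)) = st (st (lmul a (word U)) (lmul b (word V))) (word W)"
      using IH[of "a#U" "b#V" W] by (simp add: lmul_word)
    have h4: "st (st (word U) (word V)) (lmul c (word W)) = st (word U) (st (word V) (lmul c (word W)))"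
      using IH[of U V "c#W"] by (simp add: lmul_word)
    have h5: "st (st (word U) (lmul b (word V))) (word W) = st (word U) (st (lmul b (word V)) (word W))"
      using IH[of U "b#V" W] by (simp add: lmul_word)
    have h6: "st (st (lmul a (word U)) (word V)) (word W) = st (lmul a (word U)) (st (word V) (word W))"
      using IH[of "a#U" V W] by (simp add: lmul_word)
    have h7: "st (st (word U) (word V)) (word W) = st (word U) (st (word V) (word W))"
      using IH[of U V W] by (simp add: lmul_word)
    have "st (st (lmul a (word U)) (lmul b (word V))) (lmul c (word W)) = st (lmul a (word U)) (st (lmul b (word V)) (lmul c (word W)))"
      by (rule assoc_step[OF h1 h2 h3 h4 h5 h6 h7])
    then show ?thesis by (simp only: uvw lmul_word)
  qed
qed

lemma assoc: "st (st p q) r = st p (st q r)"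
proof -
  have 1: "st (st p (word v)) (word w) = st p (st (word v) (word w))" for p v w
    by (rule lin_ext[where F="\<lambda>p. st (st p (word v)) (word w)" and G="\<lambda>p. st p (st (word v) (word w))"])
       (simp_all add: lin assocw)
  have 2: "st (st p q) (word w) = st p (st q (word w))" for q w
    by (rule lin_ext[where F="\<lambda>q. st (st p q) (word w)" and G="\<lambda>q. st p (st q (word w))"])
       (simp_all add: lin 1)
  show ?thesis
    by (rule lin_ext[where F="\<lambda>r. st (st p q) r" and G="\<lambda>r. st p (st q r)"])
       (simp_all add: lin 2)
qed

end

theorem mainTheorem2:
  fixes st :: "('x, 'a::comm_ring_1) ncpoly \<Rightarrow> ('x, 'a) ncpoly \<Rightarrow> ('x, 'a) ncpoly"
  assumes "st \<in> class_P"
  shows "bilinear_prod st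
       \<and> (\<forall>p. st (word []) p = p \<and> st p (word []) = p)
       \<and> (\<forall>p q. st p q = st q p)
       \<and> (\<forall>p q r. st (st p q) r = st p (st q r))"
proof -
  from assms obtain br where b: "bilinear_prod st"
    "\<forall>w. st (word []) (word w) = word w \<and> st (word w) (word []) = word w"
    "admissible_bracket br"
    "\<forall>a b u v. st (word (a # u)) (word (b # v)) =
            lmul a (st (word u) (word (b # v)))
          + lmul b (st (word (a # u)) (word v))
          + smul (fst (br a b)) (lmul (snd (br a b)) (st (word u) (word v)))"
    unfolding class_P_def by blast
  interpret qs st br using b by (unfold_locales; blast)
  have c: "\<forall>p q. st p q = st q p" by (intro allI, rule comm)
  have a: "\<forall>p q r. st (st p q) r = st p (st q r)" by (intro allI, rule assoc)
  have u: "\<forall>p. st (word []) p = p \<and> st p (word []) = p" by (intro allI conjI, rule unitL, rule unitR)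
  show ?thesis using b(1) c a u by (intro conjI)
qed

end
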